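(* For every integer $k\ge2$ and every integer $x\ge2$, $\mathrm{ex}(2x,2k)\le 6\,\mathrm{ex}(x,2k)$.
   Context: The girth of a graph is the length of its shortest cycle ($\infty$ if none). $\mathrm{ex}(n,2k)$ is the maximum number of edges of a simple graph on $n$ vertices with girth at least $2k$. *)

theory Defs
  imports Main "HOL-Library.Extended_Nat"
begin

definition simple_graph_on :: "nat \<Rightarrow> nat set set \<Rightarrow> bool" where
  "simple_graph_on n E \<longleftrightarrow>
     E \<subseteq> {e. \<exists>u v. e = {u, v} \<and> u \<noteq> v \<and> u < n \<and> v < n}"

definition has_cycle_of_length :: "nat set set \<Rightarrow> nat \<Rightarrow> bool" where
  "has_cycle_of_length E l \<longleftrightarrow>
     3 \<le> l \<and> (\<exists>vs :: nat list. length vs = l \<and> distinct vs \<and>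
        (\<forall>i<l. {vs ! i, vs ! ((i + 1) mod l)} \<in> E))"

definition girth :: "nat set set \<Rightarrow> enat" where
  "girth E = Inf {enat l | l. has_cycle_of_length E l}"

definition ex :: "nat \<Rightarrow> nat \<Rightarrow> nat" where
  "ex n g = Max {card E | E. simple_graph_on n E \<and> enat g \<le> girth E}"

end

theory Submission
  imports Defs
begin

lemma graph_finite:
  assumes "simple_graph_on n E" shows "finite E"
proof -
  have "E \<subseteq> Pow {..<n}" using assms unfolding simple_graph_on_def by auto
  thus ?thesis by (meson finite_Pow_iff finite_lessThan finite_subset)
qed

lemma ex_set_finite: "finite {card E | E. simple_graph_on n E \<and> enat g \<le> girth E}"
proof -
  have "{E. simple_graph_on n E} \<subseteq> Pow (Pow {..<n})"
    unfolding simple_graph_on_def by auto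
  hence "finite {E. simple_graph_on n E}" by (meson finite_Pow_iff finite_lessThan finite_subset)
  hence "finite (card ` {E. simple_graph_on n E})" by simp
  moreover have "{card E | E. simple_graph_on n E \<and> enat g \<le> girth E} \<subseteq> card ` {E. simple_graph_on n E}"
    by auto
  ultimately show ?thesis using finite_subset by blast
qed

lemma ex_ge:
  assumes "simple_graph_on n E" "enat g \<le> girth E"
  shows "card E \<le> ex n g"
  unfolding ex_def using assms ex_set_finite by (intro Max_ge) auto

lemma girth_empty: "girth {} = \<infinity>"
proof -
  have "{enat l | l. has_cycle_of_length {} l} = {}"
    unfolding has_cycle_of_length_def by force
  thus ?thesis unfolding girth_def by (simp add: top_enat_def)
qed

lemma ex_attained:
  "\<exists>E. simple_graph_on n E \<and> enat g \<le> girth E \<and> card E = ex n g"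
proof -
  have "simple_graph_on n {}" unfolding simple_graph_on_def by auto
  hence ne: "{card E | E. simple_graph_on n E \<and> enat g \<le> girth E} \<noteq> {}"
  proof -
    have "enat g \<le> girth {}" by (simp add: girth_empty)
    thus ?thesis using \<open>simple_graph_on n {}\<close> by blast
  qed
  have "ex n g \<in> {card E | E. simple_graph_on n E \<and> enat g \<le> girth E}"
    unfolding ex_def using Max_in[OF ex_set_finite ne] .
  thus ?thesis by auto
qed

lemma relabel:
  assumes G: "simple_graph_on N E" and gi: "enat g \<le> girth E"
    and S: "finite S" "card S \<le> n"
  shows "card {e\<in>E. e \<subseteq> S} \<le> ex n g"
proof -
  obtain f where f: "bij_betw f S {0..<card S}" using ex_bij_betw_finite_nat[OF S(1)] by blast
  have inj: "inj_on f S" using f by (rule bij_betw_imp_inj_on)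
  have fS: "f ` S = {0..<card S}" using f by (rule bij_betw_imp_surj_on)
  define Es where "Es = {e\<in>E. e \<subseteq> S}"
  define E' where "E' = image f ` Es"
  have "Es \<subseteq> Pow S" unfolding Es_def by auto
  hence "inj_on (image f) Es" using inj_on_subset[OF inj_on_image_Pow[OF inj]] by blast
  hence cE: "card E' = card Es" unfolding E'_def by (simp add: card_image)
  have sg: "simple_graph_on n E'"
    unfolding simple_graph_on_def
  proof
    fix e' assume "e' \<in> E'"
    then obtain e where e: "e \<in> E" "e \<subseteq> S" "e' = f ` e" unfolding E'_def Es_def by blast
    then obtain u v where uv: "e = {u,v}" "u \<noteq> v" using G unfolding simple_graph_on_def by blast
    have "f u \<noteq> f v" using inj uv e(2) by (auto simp: inj_on_def)
    moreover have "u \<in> S" "v \<in> S" using uv e(2) by auto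
    hence "f u \<in> {0..<card S}" "f v \<in> {0..<card S}" using fS by blast+
    hence "f u < n" "f v < n" using S(2) by auto
    moreover have "e' = {f u, f v}" using e(3) uv(1) by simp
    ultimately show "e' \<in> {e. \<exists>u v. e = {u, v} \<and> u \<noteq> v \<and> u < n \<and> v < n}"
      by blast
  qed
  have cyc: "has_cycle_of_length E l" if h: "has_cycle_of_length E' l" for l
  proof -
    obtain vs where vs: "3 \<le> l" "length vs = l" "distinct vs"
      "\<forall>i<l. {vs ! i, vs ! ((i + 1) mod l)} \<in> E'"
      using h unfolding has_cycle_of_length_def by blast
    define h where "h = inv_into S f"
    have inS: "vs ! i \<in> f ` S" if "i < l" for i
    proof -
      from vs(4) that obtain e where "e \<in> Es" "{vs ! i, vs ! ((i + 1) mod l)} = f ` e"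
        unfolding E'_def by blast
      hence "vs ! i \<in> f ` e" by blast
      thus ?thesis using \<open>e \<in> Es\<close> unfolding Es_def by blast
    qed
    have setS: "set vs \<subseteq> f ` S" using inS vs(2) by (auto simp: in_set_conv_nth)
    have "inj_on h (f ` S)" unfolding h_def by (rule inj_on_inv_into) simp
    hence "inj_on h (set vs)" using setS inj_on_subset by blast
    hence d: "distinct (map h vs)" using vs(3) by (simp add: distinct_map)
    have edges: "\<forall>i<l. {map h vs ! i, map h vs ! ((i + 1) mod l)} \<in> E"
    proof (intro allI impI)
      fix i assume i: "i < l"
      from vs(4) i obtain e where e: "e \<in> Es" "{vs ! i, vs ! ((i + 1) mod l)} = f ` e"
        unfolding E'_def by blast
      have eS: "e \<subseteq> S" "e \<in> E" using e(1) unfolding Es_def by auto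
      have "h ` (f ` e) = e" unfolding h_def using inj eS(1) by (rule inv_into_image_cancel)
      hence he: "h ` {vs ! i, vs ! ((i + 1) mod l)} = e" using e(2) by simp
      have j: "(i + 1) mod l < l" using vs(1) by simp
      have "{map h vs ! i, map h vs ! ((i + 1) mod l)} = h ` {vs ! i, vs ! ((i + 1) mod l)}"
        using i j vs(2) by simp
      thus "{map h vs ! i, map h vs ! ((i + 1) mod l)} \<in> E" using he eS(2) by simp
    qed
    have len: "length (map h vs) = l" using vs(2) by simp
    show ?thesis unfolding has_cycle_of_length_def using vs(1) d edges len by blast
  qed
  have "girth E \<le> girth E'" unfolding girth_def
    by (rule Inf_superset_mono) (use cyc in blast)
  hence "enat g \<le> girth E'" using gi by (rule order_trans[rotated])
  hence "card E' \<le> ex n g" using ex_ge sg by blast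
  thus ?thesis using cE unfolding Es_def by simp
qed

lemma cover6:
  assumes G: "simple_graph_on N E" and gi: "enat g \<le> girth E"
    and fin: "finite S1" "finite S2" "finite S3" "finite S4" "finite S5" "finite S6"
    and c: "card S1 \<le> x" "card S2 \<le> x" "card S3 \<le> x" "card S4 \<le> x" "card S5 \<le> x" "card S6 \<le> x"
    and cov: "\<And>u v. u < N \<Longrightarrow> v < N \<Longrightarrow> (u\<in>S1 \<and> v\<in>S1) \<or> (u\<in>S2 \<and> v\<in>S2) \<or>
       (u\<in>S3 \<and> v\<in>S3) \<or> (u\<in>S4 \<and> v\<in>S4) \<or> (u\<in>S5 \<and> v\<in>S5) \<or> (u\<in>S6 \<and> v\<in>S6)"
  shows "card E \<le> 6 * ex x g"
proof -
  define F where "F = (\<lambda>S. {e\<in>E. e \<subseteq> S})"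
  have sub: "E \<subseteq> F S1 \<union> F S2 \<union> F S3 \<union> F S4 \<union> F S5 \<union> F S6"
  proof
    fix e assume e: "e \<in> E"
    then obtain u v where "e = {u,v}" "u < N" "v < N" using G unfolding simple_graph_on_def by blast
    thus "e \<in> F S1 \<union> F S2 \<union> F S3 \<union> F S4 \<union> F S5 \<union> F S6"
      using cov[of u v] e unfolding F_def by auto
  qed
  have fE: "finite E" using G graph_finite by blast
  have fF: "\<And>S. finite (F S)" unfolding F_def using fE by simp
  have "card E \<le> card (F S1 \<union> F S2 \<union> F S3 \<union> F S4 \<union> F S5 \<union> F S6)"
    using sub fF by (intro card_mono) auto
  also have "\<dots> \<le> card (F S1) + card (F S2) + card (F S3) + card (F S4) + card (F S5) + card (F S6)"
  proof -
    have u: "\<And>A B. card (A \<union> B) \<le> card A + card B" by (rule card_Un_le)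
    show ?thesis using u[of "F S1 \<union> F S2 \<union> F S3 \<union> F S4 \<union> F S5" "F S6"]
      u[of "F S1 \<union> F S2 \<union> F S3 \<union> F S4" "F S5"] u[of "F S1 \<union> F S2 \<union> F S3" "F S4"]
      u[of "F S1 \<union> F S2" "F S3"] u[of "F S1" "F S2"] by linarith
  qed
  also have "\<dots> \<le> 6 * ex x g"
    using relabel[OF G gi fin(1) c(1)] relabel[OF G gi fin(2) c(2)] relabel[OF G gi fin(3) c(3)]
      relabel[OF G gi fin(4) c(4)] relabel[OF G gi fin(5) c(5)] relabel[OF G gi fin(6) c(6)]
    unfolding F_def by linarith
  finally show ?thesis .
qed

lemma cardUn2: "card ({a..<b} \<union> {c..<d::nat}) \<le> (b - a) + (d - c)"
  using card_Un_le[of "{a..<b}" "{c..<d}"] by simp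

lemma cardUn3: "card ({a..<b} \<union> {c..<d::nat} \<union> {e..<f}) \<le> (b - a) + (d - c) + (f - e)"
proof -
  have "card ({a..<b} \<union> {c..<d::nat} \<union> {e..<f}) \<le> card ({a..<b} \<union> {c..<d::nat}) + card {e..<f}"
    by (rule card_Un_le)
  thus ?thesis using cardUn2[of a b c d] by simp
qed

lemma cov_even:
  fixes u v a :: nat
  assumes "u < 4*a" "v < 4*a"
  shows "(u \<in> {0..<2*a} \<and> v \<in> {0..<2*a}) \<or> (u \<in> {2*a..<4*a} \<and> v \<in> {2*a..<4*a}) \<or>
    (u \<in> {0..<a} \<union> {2*a..<3*a} \<and> v \<in> {0..<a} \<union> {2*a..<3*a}) \<or>
    (u \<in> {a..<2*a} \<union> {3*a..<4*a} \<and> v \<in> {a..<2*a} \<union> {3*a..<4*a}) \<or>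
    (u \<in> {0..<a} \<union> {3*a..<4*a} \<and> v \<in> {0..<a} \<union> {3*a..<4*a}) \<or>
    (u \<in> {a..<2*a} \<union> {2*a..<3*a} \<and> v \<in> {a..<2*a} \<union> {2*a..<3*a})"
proof -
  have "u < a \<or> (a \<le> u \<and> u < 2*a) \<or> (2*a \<le> u \<and> u < 3*a) \<or> (3*a \<le> u \<and> u < 4*a)" using assms by linarith
  moreover have "v < a \<or> (a \<le> v \<and> v < 2*a) \<or> (2*a \<le> v \<and> v < 3*a) \<or> (3*a \<le> v \<and> v < 4*a)" using assms by linarith
  ultimately show ?thesis by (elim disjE conjE) simp_all
qed
lemma cov_odd:
  fixes u v b :: nat
  assumes "u < 4*b+6" "v < 4*b+6"
  defines "a \<equiv> b+1"
  shows "(u \<in> {0..<2*a} \<union> {4*b+3..<4*a} \<and> v \<in> {0..<2*a} \<union> {4*b+3..<4*a}) \<or>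
    (u \<in> {2*a..<4*a+1} \<and> v \<in> {2*a..<4*a+1}) \<or>
    (u \<in> {0..<a} \<union> {2*a..<3*a} \<union> {4*a..<4*a+1} \<and> v \<in> {0..<a} \<union> {2*a..<3*a} \<union> {4*a..<4*a+1}) \<or>
    (u \<in> {a..<2*a} \<union> {3*a..<4*b+3} \<union> {4*a..<4*a+2} \<and> v \<in> {a..<2*a} \<union> {3*a..<4*b+3} \<union> {4*a..<4*a+2}) \<or>
    (u \<in> {0..<a} \<union> {3*a..<4*a} \<union> {4*a+1..<4*a+2} \<and> v \<in> {0..<a} \<union> {3*a..<4*a} \<union> {4*a+1..<4*a+2}) \<or>
    (u \<in> {a..<3*a} \<union> {4*a+1..<4*a+2} \<and> v \<in> {a..<3*a} \<union> {4*a+1..<4*a+2})"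
proof -
  have "u < b+1 \<or> (b+1 \<le> u \<and> u < 2*b+2) \<or> (2*b+2 \<le> u \<and> u < 3*b+3) \<or> (3*b+3 \<le> u \<and> u < 4*b+3) \<or>
    u = 4*b+3 \<or> u = 4*b+4 \<or> u = 4*b+5" using assms by linarith
  moreover have "v < b+1 \<or> (b+1 \<le> v \<and> v < 2*b+2) \<or> (2*b+2 \<le> v \<and> v < 3*b+3) \<or> (3*b+3 \<le> v \<and> v < 4*b+3) \<or>
    v = 4*b+3 \<or> v = 4*b+4 \<or> v = 4*b+5" using assms by linarith
  ultimately show ?thesis unfolding a_def by (elim disjE conjE) simp_all
qed
theorem lemma5p2:
  fixes k x :: nat
  assumes "k \<ge> 2" and "x \<ge> 2"
  shows "ex (2 * x) (2 * k) \<le> 6 * ex x (2 * k)"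
proof -
  obtain E where G: "simple_graph_on (2*x) E" and gi: "enat (2*k) \<le> girth E"
    and cE: "card E = ex (2*x) (2*k)" using ex_attained by blast
  define a where "a = x div 2"
  have a1: "a \<ge> 1" using assms(2) unfolding a_def by simp
  have a: "x = 2*a \<or> x = 2*a+1" unfolding a_def by presburger
  show ?thesis
  proof (cases "x = 2*a")
    case True
    have "card E \<le> 6 * ex x (2*k)"
      apply (rule cover6[OF G gi, of "{0..<2*a}" "{2*a..<4*a}" "{0..<a} \<union> {2*a..<3*a}"
            "{a..<2*a} \<union> {3*a..<4*a}" "{0..<a} \<union> {3*a..<4*a}" "{a..<2*a} \<union> {2*a..<3*a}"])
      subgoal by simp
      subgoal by simp
      subgoal by simp
      subgoal by simp
      subgoal by simp
      subgoal by simp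
      subgoal using True by simp
      subgoal using True by simp
      subgoal by (rule order_trans[OF cardUn2]) (simp add: True)
      subgoal by (rule order_trans[OF cardUn2]) (simp add: True)
      subgoal by (rule order_trans[OF cardUn2]) (simp add: True)
      subgoal by (rule order_trans[OF cardUn2]) (simp add: True)
      subgoal for u v by (rule cov_even) (use True in simp_all)
      done
    thus ?thesis using cE by simp
  next
    case False
    define b where "b = a - 1"
    have x: "x = 2*b+3" using False a a1 unfolding b_def by simp
    have "card E \<le> 6 * ex x (2*k)"
      apply (rule cover6[OF G gi, of "{0..<2*(b+1)} \<union> {4*b+3..<4*(b+1)}" "{2*(b+1)..<4*(b+1)+1}"
          "{0..<b+1} \<union> {2*(b+1)..<3*(b+1)} \<union> {4*(b+1)..<4*(b+1)+1}"
          "{b+1..<2*(b+1)} \<union> {3*(b+1)..<4*b+3} \<union> {4*(b+1)..<4*(b+1)+2}"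
          "{0..<b+1} \<union> {3*(b+1)..<4*(b+1)} \<union> {4*(b+1)+1..<4*(b+1)+2}"
          "{b+1..<3*(b+1)} \<union> {4*(b+1)+1..<4*(b+1)+2}"])
      subgoal by simp
      subgoal by simp
      subgoal by simp
      subgoal by simp
      subgoal by simp
      subgoal by simp
      subgoal by (rule order_trans[OF cardUn2]) (simp add: x)
      subgoal using x by simp
      subgoal by (rule order_trans[OF cardUn3]) (simp add: x)
      subgoal by (rule order_trans[OF cardUn3]) (simp add: x)
      subgoal by (rule order_trans[OF cardUn3]) (simp add: x)
      subgoal by (rule order_trans[OF cardUn2]) (simp add: x)
      subgoal for u v by (rule cov_odd) (use x in simp_all)
      done
    thus ?thesis using cE by simp
  qed
qed

end
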